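(* Let $\mathcal{H}$ be a complex separable Hilbert space and let $A = A^*$ be a bounded injective operator on $\mathcal{H}$ which is Hankel with respect to a pure isometry $V$ of multiplicity $N$, and suppose $AV > 0$. Let $A = J|A|$ be the polar decomposition of $A$, where $|A| = \sqrt{A^*A}$ and $J$ is a self-adjoint unitary. Then $|A| > 0$ is $W$-Hankel and doubly-positive, where $W = JV$. Moreover, if $W = W_0 \oplus U$ is the Wold decomposition of $W$ on $\mathcal{H} = \mathcal{H}_0 \oplus \mathcal{H}'$, with $W_0$ a pure isometry on $\mathcal{H}_0$ and $U$ unitary on $\mathcal{H}'$, then $W_0$ has multiplicity $N$, both $\mathcal{H}_0$ and $\mathcal{H}'$ are invariant under $|A|$, and either $U = I_{\mathcal{H}'}$ or $\mathcal{H}' = \{0\}$.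
   Context: For an isometry $V$, a bounded operator $A$ is $V$-Hankel if $V^*A = AV$; a positive semi-definite $A$ is $V$-Hankel and doubly-positive if it is $V$-Hankel and $AV = V^*A$ is positive semi-definite. For an operator $T$, $T>0$ means $T$ is positive semi-definite and injective. An isometry is pure if it is unitarily equivalent to the unilateral shift $M_z$ on $H^2\otimes\mathbb{C}^n$ for some $n \in \mathbb{N}\cup\{+\infty\}$; its multiplicity is $n = \dim(\mathrm{Ran}\, V)^\perp$. The Wold decomposition writes any isometry as an orthogonal direct sum of a pure isometry and a unitary. *)

theory Defs
  imports "HOL-Analysis.Analysis" "HOL-Library.Extended_Nat"
begin

class chilbert = real_normed_vector + complete_space +
  fixes scaleC :: "complex \<Rightarrow> 'a \<Rightarrow> 'a"
    and cinner :: "'a \<Rightarrow> 'a \<Rightarrow> complex"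
  assumes scaleC_add_right: "scaleC a (x + y) = scaleC a x + scaleC a y"
    and scaleC_add_left: "scaleC (a + b) x = scaleC a x + scaleC b x"
    and scaleC_scaleC: "scaleC a (scaleC b x) = scaleC (a * b) x"
    and scaleC_one: "scaleC 1 x = x"
    and scaleC_of_real: "scaleC (complex_of_real r) x = scaleR r x"
    and cinner_add_right: "cinner x (y + z) = cinner x y + cinner x z"
    and cinner_scaleC_right: "cinner x (scaleC a y) = a * cinner x y"
    and cinner_commute: "cinner y x = cnj (cinner x y)"
    and cinner_self: "cinner x x = complex_of_real ((norm x)\<^sup>2)"

definition separable_space :: "'a::chilbert itself \<Rightarrow> bool" where
  "separable_space _ \<longleftrightarrow> (\<exists>D::'a set. countable D \<and> closure D = UNIV)"

definition bop :: "('a::chilbert \<Rightarrow> 'a) \<Rightarrow> bool" where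
  "bop T \<longleftrightarrow> (\<forall>x y. T (x + y) = T x + T y) \<and> (\<forall>c x. T (scaleC c x) = scaleC c (T x))
      \<and> (\<exists>K. \<forall>x. norm (T x) \<le> K * norm x)"

definition adj :: "('a::chilbert \<Rightarrow> 'a) \<Rightarrow> ('a \<Rightarrow> 'a)" where
  "adj T = (SOME S. \<forall>x y. cinner (T x) y = cinner x (S y))"

definition psd :: "('a::chilbert \<Rightarrow> 'a) \<Rightarrow> bool" where
  "psd T \<longleftrightarrow> bop T \<and> (\<forall>x. Im (cinner x (T x)) = 0 \<and> 0 \<le> Re (cinner x (T x)))"

text \<open>T > 0: positive semi-definite and injective.\<close>
definition strictly_pos :: "('a::chilbert \<Rightarrow> 'a) \<Rightarrow> bool" where
  "strictly_pos T \<longleftrightarrow> psd T \<and> inj T"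

definition isometry :: "('a::chilbert \<Rightarrow> 'a) \<Rightarrow> bool" where
  "isometry V \<longleftrightarrow> bop V \<and> (\<forall>x. norm (V x) = norm x)"

definition unitary_op :: "('a::chilbert \<Rightarrow> 'a) \<Rightarrow> bool" where
  "unitary_op U \<longleftrightarrow> isometry U \<and> surj U"

definition hankel :: "('a::chilbert \<Rightarrow> 'a) \<Rightarrow> ('a \<Rightarrow> 'a) \<Rightarrow> bool" where
  "hankel V A \<longleftrightarrow> bop A \<and> adj V \<circ> A = A \<circ> V"

definition hankel_doubly_pos :: "('a::chilbert \<Rightarrow> 'a) \<Rightarrow> ('a \<Rightarrow> 'a) \<Rightarrow> bool" where
  "hankel_doubly_pos V A \<longleftrightarrow> psd A \<and> hankel V A \<and> psd (A \<circ> V)"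

text \<open>H^2 (x) C^n is modelled by its coefficient space: square-summable arrays
f k j (k = Taylor index, j < n the C^n-coordinate), n possibly infinite.
M_z shifts the Taylor index.\<close>

definition ell2n :: "enat \<Rightarrow> (nat \<Rightarrow> nat \<Rightarrow> complex) set" where
  "ell2n n = {f. (\<forall>k j. n \<le> enat j \<longrightarrow> f k j = 0) \<and>
                 (\<lambda>(k, j). (cmod (f k j))\<^sup>2) summable_on UNIV}"

definition shift_Mz :: "(nat \<Rightarrow> nat \<Rightarrow> complex) \<Rightarrow> (nat \<Rightarrow> nat \<Rightarrow> complex)" where
  "shift_Mz f = (\<lambda>k j. if k = 0 then 0 else f (k - 1) j)"

text \<open>The restriction of W to the (invariant) set H0 is a pure isometry of
multiplicity n: it is unitarily equivalent to M_z on H^2 (x) C^n.\<close>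
definition pure_on :: "'a::chilbert set \<Rightarrow> ('a \<Rightarrow> 'a) \<Rightarrow> enat \<Rightarrow> bool" where
  "pure_on H0 W n \<longleftrightarrow> (\<forall>x\<in>H0. W x \<in> H0) \<and>
     (\<exists>U. bij_betw U H0 (ell2n n) \<and>
          (\<forall>x\<in>H0. \<forall>y\<in>H0. U (x + y) = (\<lambda>k j. U x k j + U y k j)) \<and>
          (\<forall>c. \<forall>x\<in>H0. U (scaleC c x) = (\<lambda>k j. c * U x k j)) \<and>
          (\<forall>x\<in>H0. (norm x)\<^sup>2 = (\<Sum>\<^sub>\<infinity>(k, j)\<in>UNIV. (cmod (U x k j))\<^sup>2)) \<and>
          (\<forall>x\<in>H0. U (W x) = shift_Mz (U x)))"

definition pure_isometry :: "('a::chilbert \<Rightarrow> 'a) \<Rightarrow> enat \<Rightarrow> bool" where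
  "pure_isometry V n \<longleftrightarrow> isometry V \<and> pure_on UNIV V n"

definition closed_csubspace :: "'a::chilbert set \<Rightarrow> bool" where
  "closed_csubspace S \<longleftrightarrow> 0 \<in> S \<and> (\<forall>x\<in>S. \<forall>y\<in>S. x + y \<in> S) \<and>
     (\<forall>c. \<forall>x\<in>S. scaleC c x \<in> S) \<and> closed S"

definition wold_decomp :: "('a::chilbert \<Rightarrow> 'a) \<Rightarrow> 'a set \<Rightarrow> 'a set \<Rightarrow> bool" where
  "wold_decomp W H0 H1 \<longleftrightarrow> closed_csubspace H0 \<and> closed_csubspace H1 \<and>
     (\<forall>x\<in>H0. \<forall>y\<in>H1. cinner x y = 0) \<and> (\<forall>z. \<exists>x\<in>H0. \<exists>y\<in>H1. z = x + y) \<and>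
     (\<exists>m. pure_on H0 W m) \<and> (\<forall>x\<in>H1. W x \<in> H1) \<and> W ` H1 = H1"

end

theory Submission
  imports Defs
begin

lemma cinner_add_left: "cinner (x + y) z = cinner x z + cinner (y::'a::chilbert) z"
  by (metis cinner_commute cinner_add_right complex_cnj_add)
lemma cinner_scaleC_left: "cinner (scaleC a x) (y::'a::chilbert) = cnj a * cinner x y"
  by (metis cinner_commute cinner_scaleC_right complex_cnj_mult complex_cnj_cnj)
lemma cinner_zero_right[simp]: "cinner (x::'a::chilbert) 0 = 0"
  using cinner_add_right[of x 0 0] by simp
lemma cinner_zero_left[simp]: "cinner 0 (x::'a::chilbert) = 0"
  using cinner_add_left[of 0 0 x] by simp
lemma scaleC_minus1: "scaleC (-1) (x::'a::chilbert) = - x"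
  using scaleC_of_real[of "-1" x] by simp
lemma scaleC_zero_right[simp]: "scaleC c (0::'a::chilbert) = 0"
  using scaleC_add_right[of c 0 0] by simp
lemma scaleC_zero_left[simp]: "scaleC 0 (x::'a::chilbert) = 0"
  using scaleC_of_real[of 0 x] by simp
lemma cinner_minus_right: "cinner x (- y) = - cinner x (y::'a::chilbert)"
  using cinner_add_right[of x y "-y"] by (simp add: eq_neg_iff_add_eq_0 add.commute)
lemma cinner_minus_left: "cinner (- x) y = - cinner x (y::'a::chilbert)"
  using cinner_add_left[of x "-x" y] by (simp add: eq_neg_iff_add_eq_0 add.commute)
lemma cinner_diff_right: "cinner x (y - z) = cinner x y - cinner x (z::'a::chilbert)"
  unfolding diff_conv_add_uminus by (simp only: cinner_add_right cinner_minus_right)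
lemma cinner_diff_left: "cinner (x - y) z = cinner x z - cinner y (z::'a::chilbert)"
  unfolding diff_conv_add_uminus by (simp only: cinner_add_left cinner_minus_left)
lemma cinner_self_Re: "Re (cinner x x) = (norm (x::'a::chilbert))^2"
  by (simp add: cinner_self)
lemma cinner_self_Im: "Im (cinner x (x::'a::chilbert)) = 0"
  by (simp add: cinner_self)
lemma cinner_self_eq_0: "cinner x x = 0 \<longleftrightarrow> (x::'a::chilbert) = 0"
  by (simp add: cinner_self)
lemma cinner_ext: "(\<And>y. cinner x y = cinner z y) \<Longrightarrow> x = (z::'a::chilbert)"
proof -
  assume h: "\<And>y. cinner x y = cinner z y"
  have "cinner (x - z) (x - z) = 0" by (simp add: cinner_diff_left h)
  then show ?thesis by (simp add: cinner_self_eq_0)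
qed
lemma cinner_ext_right: "(\<And>y. cinner y x = cinner y z) \<Longrightarrow> x = (z::'a::chilbert)"
proof -
  assume h: "\<And>y. cinner y x = cinner y z"
  have "cinner (x - z) (x - z) = 0" by (simp add: cinner_diff_right h)
  then show ?thesis by (simp add: cinner_self_eq_0)
qed
lemma norm_scaleC: "norm (scaleC c (x::'a::chilbert)) = cmod c * norm x"
proof -
  have "complex_of_real ((norm (scaleC c x))^2) = cinner (scaleC c x) (scaleC c x)"
    by (rule cinner_self[symmetric])
  also have "\<dots> = cnj c * c * cinner x x"
    by (simp add: cinner_scaleC_left cinner_scaleC_right)
  also have "\<dots> = complex_of_real ((cmod c * norm x)^2)"
    by (simp only: cinner_self power_mult_distrib of_real_mult complex_norm_square mult.commute)
  finally have "(norm (scaleC c x))^2 = (cmod c * norm x)^2" using of_real_eq_iff by blast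
  then show ?thesis by (simp add: power2_eq_iff_nonneg)
qed
lemma norm_add_sq: "(norm (x + y))^2 = (norm x)^2 + (norm (y::'a::chilbert))^2 + 2 * Re (cinner x y)"
proof -
  have "complex_of_real ((norm (x+y))^2) = cinner (x+y) (x+y)"
    by (rule cinner_self[symmetric])
  also have "\<dots> = cinner x x + cinner y y + cinner x y + cinner y x"
    by (simp add: cinner_add_left cinner_add_right)
  also have "\<dots> = cinner x x + cinner y y + cinner x y + cnj (cinner x y)"
    by (simp add: cinner_commute[where x=x and y=y])
  finally have "complex_of_real ((norm (x+y))^2) = cinner x x + cinner y y + cinner x y + cnj (cinner x y)" .
  then have "(norm (x+y))^2 = Re (cinner x x + cinner y y + cinner x y + cnj (cinner x y))"
    by (metis Re_complex_of_real)
  then show ?thesis by (simp add: cinner_self)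
qed
lemma norm_diff_sq: "(norm (x - y))^2 = (norm x)^2 + (norm (y::'a::chilbert))^2 - 2 * Re (cinner x y)"
  using norm_add_sq[of x "-y"] by (simp add: cinner_minus_right)

lemma real_quad_lemma:
  fixes a q c :: real
  assumes "\<And>t. 0 \<le> a - 2 * t * q + t^2 * q * c" "0 \<le> a" "0 \<le> c" "0 \<le> q"
  shows "q \<le> a * c"
proof (cases "c = 0")
  case True
  show ?thesis
  proof (rule ccontr)
    assume "\<not> ?thesis" then have "q > 0" using True by simp
    have "0 \<le> a - 2 * ((a+1)/(2*q)) * q" using assms(1)[of "(a+1)/(2*q)"] True by simp
    also have "\<dots> = -1" using \<open>q>0\<close> by (simp add: field_simps)
    finally show False by simp
  qed
next
  case False
  then have c: "c > 0" using assms(3) by simp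
  have "0 \<le> a - 2 * (1/c) * q + (1/c)^2 * q * c" by (rule assms(1))
  also have "\<dots> = a - q / c" using c by (simp add: field_simps power2_eq_square)
  finally show ?thesis using c by (simp add: field_simps)
qed

lemma sesq_CS:
  fixes b :: "'a::chilbert \<Rightarrow> 'a \<Rightarrow> complex"
  assumes add: "\<And>x y z. b x (y + z) = b x y + b x z"
    and sc: "\<And>x y c. b x (scaleC c y) = c * b x y"
    and herm: "\<And>x y. b y x = cnj (b x y)"
    and pos: "\<And>x. Im (b x x) = 0 \<and> 0 \<le> Re (b x x)"
  shows "(cmod (b x y))^2 \<le> Re (b x x) * Re (b y y)"
proof -
  have addl: "\<And>x y z. b (x + y) z = b x z + b y z"
    by (metis add herm complex_cnj_add)
  have scl: "\<And>x y c. b (scaleC c x) y = cnj c * b x y"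
    by (metis sc herm complex_cnj_mult complex_cnj_cnj)
  define w where "w = b x y"
  have "0 \<le> Re (b x x) - 2 * t * (cmod w)^2 + t^2 * (cmod w)^2 * Re (b y y)" for t :: real
  proof -
    define s where "s = - (complex_of_real t * cnj w)"
    have "b (x + scaleC s y) (x + scaleC s y) = b x x + s * w + cnj s * cnj w + cnj s * s * b y y"
      by (simp add: add addl sc scl w_def herm[of x y] algebra_simps)
    also have "\<dots> = b x x - 2 * complex_of_real t * (w * cnj w) + (complex_of_real t)^2 * (w * cnj w) * b y y"
      by (simp add: s_def algebra_simps power2_eq_square)
    finally have e: "b (x + scaleC s y) (x + scaleC s y) = b x x - 2 * complex_of_real t * complex_of_real ((cmod w)^2) + (complex_of_real t)^2 * complex_of_real ((cmod w)^2) * b y y"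
      by (simp only: complex_norm_square)
    have "Re (b (x + scaleC s y) (x + scaleC s y)) = Re (b x x) - 2 * t * (cmod w)^2 + t^2 * (cmod w)^2 * Re (b y y)"
      unfolding e by (simp add: power2_eq_square)
    then show ?thesis using pos by metis
  qed
  then have "(cmod w)^2 \<le> Re (b x x) * Re (b y y)"
    by (intro real_quad_lemma) (use pos in auto)
  then show ?thesis by (simp add: w_def)
qed

lemma cinner_CS: "cmod (cinner x y) \<le> norm x * norm (y::'a::chilbert)"
proof -
  have "(cmod (cinner x y))^2 \<le> Re (cinner x x) * Re (cinner y y)"
    by (rule sesq_CS) (auto simp: cinner_add_right cinner_scaleC_right cinner_self_Im cinner_self_Re intro: cinner_commute)
  also have "\<dots> = (norm x * norm y)^2" by (simp add: cinner_self_Re power_mult_distrib)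
  finally show ?thesis by (simp add: power2_le_iff_abs_le)
qed

lemma scaleC_real: "scaleC (complex_of_real r) x = scaleR r (x::'a::chilbert)"
  by (rule scaleC_of_real)

lemma parallelogram: "(norm (a - b))^2 + (norm (a + b))^2 = 2 * (norm a)^2 + 2 * (norm (b::'a::chilbert))^2"
  using norm_add_sq[of a b] norm_diff_sq[of a b] by simp

lemma riesz:
  fixes f :: "'a::chilbert \<Rightarrow> complex"
  assumes add: "\<And>x y. f (x+y) = f x + f y" and sc: "\<And>c x. f (scaleC c x) = c * f x"
    and bnd: "\<And>x. cmod (f x) \<le> K * norm x"
  shows "\<exists>y. \<forall>x. f x = cinner y x"
proof (cases "\<forall>x. f x = 0")
  case True then show ?thesis by (intro exI[of _ 0]) simp
next
  case False
  then obtain x1 where x1: "f x1 \<noteq> 0" by blast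
  define x0 where "x0 = scaleC (1 / f x1) x1"
  have fx0: "f x0 = 1" using x1 by (simp add: x0_def sc)
  have fminus: "f (- x) = - f x" for x using sc[of "-1" x] by (simp add: scaleC_minus1)
  have fdiff: "f (x - y) = f x - f y" for x y using add[of x "-y"] fminus[of y] by simp
  have fR: "f (scaleR r x) = r * f x" for r x using sc[of "complex_of_real r" x] by (simp add: scaleC_real)
  define Ks where "Ks = {k. f k = 0}"
  have K0: "0 \<in> Ks" using fR[of 0 0] by (simp add: Ks_def)
  have Kadd: "a \<in> Ks \<Longrightarrow> b \<in> Ks \<Longrightarrow> a + b \<in> Ks" for a b by (simp add: Ks_def add)
  have Kmid: "a \<in> Ks \<Longrightarrow> b \<in> Ks \<Longrightarrow> scaleR (1/2) (a + b) \<in> Ks" for a b by (simp add: Ks_def add fR)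
  define g where "g k = (norm (x0 - k))^2" for k
  define d2 where "d2 = Inf (g ` Ks)"
  have bdd: "bdd_below (g ` Ks)" by (rule bdd_belowI[of _ 0]) (auto simp: g_def)
  have d2le: "k \<in> Ks \<Longrightarrow> d2 \<le> g k" for k unfolding d2_def by (rule cInf_lower) (use bdd in auto)
  have "\<exists>k\<in>Ks. g k < d2 + 1 / (real n + 1)" for n
  proof -
    have "Inf (g ` Ks) < d2 + 1 / (real n + 1)" unfolding d2_def by (simp add: add_pos_pos)
    then obtain v where "v \<in> g ` Ks" "v < d2 + 1 / (real n + 1)"
      using cInf_lessD[of "g ` Ks"] K0 by blast
    then show ?thesis by blast
  qed
  then obtain ks where ks: "\<And>n. ks n \<in> Ks" "\<And>n. g (ks n) < d2 + 1 / (real n + 1)"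
    by metis
  have close: "(norm (ks m - ks n))^2 \<le> 2 / (real n + 1) + 2 / (real m + 1)" for m n
  proof -
    have e: "(x0 - ks n) - (x0 - ks m) = ks m - ks n" by simp
    have p: "(norm (ks m - ks n))^2 + (norm ((x0 - ks n) + (x0 - ks m)))^2
        = 2 * g (ks n) + 2 * g (ks m)" using parallelogram[of "x0 - ks n" "x0 - ks m"] unfolding e g_def .
    have "(x0 - ks n) + (x0 - ks m) = scaleR 2 (x0 - scaleR (1/2) (ks n + ks m))"
      by (simp add: algebra_simps scaleR_2)
    then have q: "(norm ((x0 - ks n) + (x0 - ks m)))^2 = 4 * g (scaleR (1/2) (ks n + ks m))"
      by (simp add: g_def power_mult_distrib)
    have "d2 \<le> g (scaleR (1/2) (ks n + ks m))" by (rule d2le) (rule Kmid; rule ks)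
    then show ?thesis using ks(2)[of n] ks(2)[of m] p q by linarith
  qed
  have "Cauchy ks"
  proof (rule metric_CauchyI)
    fix e :: real assume e: "0 < e"
    obtain N :: nat where N: "4 / (e^2) < real N" using reals_Archimedean2 by blast
    have "4 / (real N + 1) < e^2"
    proof -
      have "4 < real N * e^2" using N e by (simp add: field_simps)
      then have "4 < (real N + 1) * e^2" using e by (smt (verit) mult_right_mono zero_le_power2)
      then show ?thesis by (simp add: field_simps)
    qed
    show "\<exists>M. \<forall>m\<ge>M. \<forall>n\<ge>M. dist (ks m) (ks n) < e"
    proof (intro exI allI impI)
      fix m n assume mn: "N \<le> m" "N \<le> n"
      have "2 / (real n + 1) \<le> 2 / (real N + 1)" "2 / (real m + 1) \<le> 2 / (real N + 1)"
        using mn by (simp_all add: frac_le)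
      then have "(dist (ks m) (ks n))^2 < e^2" using close[of m n] \<open>4 / (real N + 1) < e^2\<close>
        by (simp add: dist_norm)
      then show "dist (ks m) (ks n) < e" using e by (simp add: power_less_imp_less_base)
    qed
  qed
  then obtain k where lim: "ks \<longlonglongrightarrow> k" using Cauchy_convergent_iff convergent_def by blast
  have "(\<lambda>n. ks n - k) \<longlonglongrightarrow> 0" using LIM_zero[OF lim] .
  then have "(\<lambda>n. norm (ks n - k)) \<longlonglongrightarrow> 0" by (rule tendsto_norm_zero)
  then have nlim: "(\<lambda>n. norm (k - ks n)) \<longlonglongrightarrow> 0" by (simp add: norm_minus_commute)
  have "cmod (f k) \<le> K * norm (k - ks n)" for n
    using bnd[of "k - ks n"] ks(1)[of n] by (simp add: fdiff Ks_def)
  then have "cmod (f k) \<le> K * 0"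
    by (intro LIMSEQ_le_const[of "\<lambda>n. K * norm (k - ks n)"]) (auto intro!: tendsto_mult_right_zero nlim)
  then have kK: "k \<in> Ks" by (simp add: Ks_def)
  define z where "z = x0 - k"
  have fz: "f z = 1" using kK fx0 by (simp add: z_def fdiff Ks_def)
  have "(\<lambda>n. g (ks n)) \<longlonglongrightarrow> (norm z)^2" unfolding g_def z_def
    by (intro tendsto_intros lim)
  moreover have "(\<lambda>n. 1 / (real n + 1)) \<longlonglongrightarrow> 0"
    using LIMSEQ_Suc[OF lim_1_over_n[where 'a=real]] by (simp add: add.commute)
  then have "(\<lambda>n. d2 + 1 / (real n + 1)) \<longlonglongrightarrow> d2 + 0"
    by (intro tendsto_add tendsto_const)
  ultimately have zd: "(norm z)^2 \<le> d2"
    using ks(2) by (intro LIMSEQ_le[of "\<lambda>n. g (ks n)" _ "\<lambda>n. d2 + 1 / (real n + 1)"]) (auto intro: less_imp_le)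
  have zmin: "(norm z)^2 \<le> (norm (z - w))^2" if "w \<in> Ks" for w
  proof -
    have "z - w = x0 - (k + w)" by (simp add: z_def)
    then have "(norm (z - w))^2 = g (k + w)" unfolding g_def by (simp only:)
    moreover have "d2 \<le> g (k + w)" by (rule d2le) (rule Kadd[OF kK that])
    ultimately show ?thesis using zd by simp
  qed
  have orth: "cinner z w = 0" if "w \<in> Ks" for w
  proof -
    define q where "q = cinner z w"
    have "0 \<le> 0 - 2 * s * (cmod q)^2 + s^2 * (cmod q)^2 * (norm w)^2" for s :: real
    proof -
      define t where "t = complex_of_real s * cnj q"
      have tw: "scaleC t w \<in> Ks" using that by (simp add: Ks_def sc)
      have "cinner z (scaleC t w) = complex_of_real s * (q * cnj q)"
        by (simp add: t_def cinner_scaleC_right q_def[symmetric])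
      also have "\<dots> = complex_of_real (s * (cmod q)^2)"
        by (simp only: complex_norm_square[symmetric] of_real_mult)
      finally have "Re (cinner z (scaleC t w)) = s * (cmod q)^2" by simp
      moreover have "(norm (scaleC t w))^2 = s^2 * (cmod q)^2 * (norm w)^2"
        by (simp add: norm_scaleC t_def norm_mult power_mult_distrib)
      ultimately show ?thesis using zmin[OF tw] norm_diff_sq[of z "scaleC t w"] by simp
    qed
    then have "(cmod q)^2 \<le> 0 * (norm w)^2" by (intro real_quad_lemma) auto
    then show ?thesis by (simp add: q_def)
  qed
  have zne: "z \<noteq> 0" using fz fR[of 0 0] by auto
  define y where "y = scaleC (complex_of_real (1 / (norm z)^2)) z"
  have "f x = cinner y x" for x
  proof -
    have "x - scaleC (f x) z \<in> Ks" by (simp add: Ks_def fdiff sc fz)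
    then have "cinner z (x - scaleC (f x) z) = 0" by (rule orth)
    then have "cinner z x - f x * cinner z z = 0"
      by (simp add: cinner_diff_right cinner_scaleC_right)
    then have "cinner z x = f x * complex_of_real ((norm z)^2)" by (simp add: cinner_self)
    then show ?thesis using zne by (simp add: y_def cinner_scaleC_left field_simps)
  qed
  then show ?thesis by blast
qed

lemma bop_add: "bop T \<Longrightarrow> T (x + y) = T x + T y" by (simp add: bop_def)
lemma bop_scaleC: "bop T \<Longrightarrow> T (scaleC c x) = scaleC c (T x)" by (simp add: bop_def)
lemma bop_zero: "bop T \<Longrightarrow> T 0 = (0::'a::chilbert)"
  using bop_scaleC[of T 0 0] by simp
lemma bop_minus: "bop T \<Longrightarrow> T (- x) = - T (x::'a::chilbert)"
  using bop_scaleC[of T "-1" x] by (simp add: scaleC_minus1)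
lemma bop_diff: "bop T \<Longrightarrow> T (x - y) = T x - T (y::'a::chilbert)"
  using bop_add[of T x "-y"] bop_minus[of T y] by simp
lemma bop_bound: "bop T \<Longrightarrow> \<exists>K. \<forall>x. norm (T x) \<le> K * norm (x::'a::chilbert)" by (simp add: bop_def)
lemma bop_comp: "bop S \<Longrightarrow> bop T \<Longrightarrow> bop (S \<circ> (T::'a::chilbert\<Rightarrow>'a))"
proof -
  assume S: "bop S" and T: "bop T"
  obtain K1 where K1: "\<And>x. norm (S x) \<le> K1 * norm x" using bop_bound[OF S] by blast
  obtain K2 where K2: "\<And>x. norm (T x) \<le> K2 * norm x" using bop_bound[OF T] by blast
  have "norm (S (T x)) \<le> (max K1 0 * max K2 0) * norm x" for x
  proof -
    have "norm (S (T x)) \<le> max K1 0 * norm (T x)"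
      using K1[of "T x"] by (smt (verit) mult_right_mono norm_ge_zero)
    also have "\<dots> \<le> max K1 0 * (max K2 0 * norm x)"
      using K2[of x] by (intro mult_left_mono) (auto, smt (verit) mult_right_mono norm_ge_zero)
    finally show ?thesis by (simp add: mult.assoc)
  qed
  then show ?thesis using S T by (auto simp: bop_def)
qed

lemma adj_exists: "bop T \<Longrightarrow> \<exists>S. \<forall>x y. cinner (T x) y = cinner x (S y)"
proof -
  assume T: "bop T"
  obtain K where K: "\<And>x. norm (T x) \<le> K * norm x" using bop_bound[OF T] by blast
  have "\<forall>y. \<exists>s. \<forall>x. cinner y (T x) = cinner s x"
  proof
    fix y
    show "\<exists>s. \<forall>x. cinner y (T x) = cinner s x"
    proof (rule riesz)
      show "cinner y (T (x + z)) = cinner y (T x) + cinner y (T z)" for x z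
        by (simp add: bop_add[OF T] cinner_add_right)
      show "cinner y (T (scaleC c x)) = c * cinner y (T x)" for c x
        by (simp add: bop_scaleC[OF T] cinner_scaleC_right)
      show "cmod (cinner y (T x)) \<le> (norm y * K) * norm x" for x
      proof -
        have "cmod (cinner y (T x)) \<le> norm y * norm (T x)" by (rule cinner_CS)
        also have "\<dots> \<le> norm y * (K * norm x)" by (intro mult_left_mono K) simp
        finally show ?thesis by (simp add: mult.assoc)
      qed
    qed
  qed
  then obtain S where S: "\<And>y x. cinner y (T x) = cinner (S y) x" by metis
  have "cinner (T x) y = cinner x (S y)" for x y
    by (metis S cinner_commute)
  then show ?thesis by blast
qed

lemma adj_prop: "bop T \<Longrightarrow> cinner (T x) y = cinner x (adj T y)"
  unfolding adj_def using someI_ex[OF adj_exists] by blast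

lemma adj_unique: "bop T \<Longrightarrow> (\<And>x y. cinner (T x) y = cinner x (S y)) \<Longrightarrow> adj T = S"
proof
  fix y assume T: "bop T" and S: "\<And>x y. cinner (T x) y = cinner x (S y)"
  show "adj T y = S y" by (rule cinner_ext_right) (metis T S adj_prop)
qed

lemma psd_herm:
  assumes "psd P" shows "cinner (P x) y = cinner x (P (y::'a::chilbert))"
proof -
  have bP: "bop P" and pos: "\<And>u. Im (cinner u (P u)) = 0" using assms by (auto simp: psd_def)
  define a where "a = cinner x (P y)"
  define b where "b = cinner y (P x)"
  have "cinner (x + y) (P (x + y)) = cinner x (P x) + a + b + cinner y (P y)"
    by (simp add: bop_add[OF bP] cinner_add_left cinner_add_right a_def b_def)
  then have 1: "Im (a + b) = 0" using pos[of "x+y"] pos[of x] pos[of y] by simp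
  have "cinner (x + scaleC \<i> y) (P (x + scaleC \<i> y)) = cinner x (P x) + \<i> * a - \<i> * b + cinner y (P y)"
    by (simp add: bop_add[OF bP] bop_scaleC[OF bP] cinner_add_left cinner_add_right
        cinner_scaleC_left cinner_scaleC_right a_def b_def algebra_simps)
  then have 2: "Re (a - b) = 0" using pos[of "x + scaleC \<i> y"] pos[of x] pos[of y] by simp
  have "cnj b = a" using 1 2 by (intro complex_eqI) auto
  then show ?thesis by (metis cinner_commute b_def a_def)
qed

lemma isometry_bop: "isometry V \<Longrightarrow> bop V" by (simp add: isometry_def)
lemma isometry_norm: "isometry V \<Longrightarrow> norm (V x) = norm x" by (simp add: isometry_def)

locale thmC =
  fixes A V P J :: "'a::chilbert \<Rightarrow> 'a" and N :: enat
  assumes A_bop: "bop A" and A_sa: "adj A = A" and A_inj: "inj A"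
    and V_pure: "pure_isometry V N"
    and A_hankel: "hankel V A"
    and AV_pos: "strictly_pos (A \<circ> V)"
    and P_psd: "psd P" and P_sq: "P \<circ> P = adj A \<circ> A"
    and J_bop: "bop J" and J_sa: "adj J = J" and J_unitary: "unitary_op J"
    and polar: "A = J \<circ> P"
begin

lemma V_iso: "isometry V" using V_pure by (simp add: pure_isometry_def)
lemma V_bop: "bop V" using V_iso by (simp add: isometry_def)
lemma P_bop: "bop P" using P_psd by (simp add: psd_def)
lemma J_iso: "isometry J" using J_unitary by (simp add: unitary_op_def)
lemma J_surj: "surj J" using J_unitary by (simp add: unitary_op_def)
lemma A_eq: "A x = J (P x)" using polar by simp
lemma J_herm: "cinner (J x) y = cinner x (J y)" using adj_prop[OF J_bop] J_sa by simp
lemma A_herm: "cinner (A x) y = cinner x (A y)" using adj_prop[OF A_bop] A_sa by simp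
lemma P_herm: "cinner (P x) y = cinner x (P y)" by (rule psd_herm[OF P_psd])
lemma V_adj: "cinner (V x) y = cinner x (adj V y)" by (rule adj_prop[OF V_bop])
lemma hank: "adj V (A x) = A (V x)"
  using A_hankel unfolding hankel_def by (metis comp_apply)

lemma JJ: "J (J x) = x"
proof -
  have "cinner (J (J x)) x = complex_of_real ((norm x)^2)"
    by (simp add: J_herm[of "J x" x] cinner_self isometry_norm[OF J_iso])
  then have "(norm (J (J x) - x))^2 = 0"
    using norm_diff_sq[of "J (J x)" x] by (simp add: isometry_norm[OF J_iso])
  then show ?thesis by simp
qed

lemma JP: "J (P x) = P (J x)"
proof (rule cinner_ext_right)
  fix y
  have "cinner y (J (P x)) = cinner y (A x)" by (simp add: A_eq)
  also have "\<dots> = cinner (A y) x" by (simp add: A_herm)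
  also have "\<dots> = cinner (P y) (J x)" by (simp add: A_eq J_herm)
  also have "\<dots> = cinner y (P (J x))" by (simp add: P_herm)
  finally show "cinner y (J (P x)) = cinner y (P (J x))" .
qed

lemma P_inj: "inj P"
proof (rule injI)
  fix x y assume "P x = P y"
  then have "A x = A y" by (simp add: A_eq)
  then show "x = y" using A_inj by (simp add: inj_eq)
qed

lemma W_bop: "bop (J \<circ> V)" by (rule bop_comp[OF J_bop V_bop])
lemma W_iso: "isometry (J \<circ> V)"
  using W_bop by (simp add: isometry_def isometry_norm[OF J_iso] isometry_norm[OF V_iso])

lemma adjW: "adj (J \<circ> V) = adj V \<circ> J"
  by (rule adj_unique[OF W_bop]) (simp add: J_herm V_adj)

lemma PW_eq: "P \<circ> (J \<circ> V) = A \<circ> V"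
  by (rule ext) (simp add: A_eq JP)

lemma hankW: "adj (J \<circ> V) \<circ> P = P \<circ> (J \<circ> V)"
  by (rule ext) (simp add: adjW JP[symmetric] A_eq[symmetric] hank)

lemma PW_psd: "psd (P \<circ> (J \<circ> V))"
  using AV_pos PW_eq by (simp add: strictly_pos_def)

lemma PW_herm: "cinner (P ((J \<circ> V) x)) y = cinner (P x) ((J \<circ> V) y)"
proof -
  have "P ((J \<circ> V) x) = adj (J \<circ> V) (P x)" using hankW by (metis comp_apply)
  then show ?thesis using adj_prop[OF W_bop, of y "P x"]
    by (metis cinner_commute)
qed

lemma part1: "strictly_pos P \<and> hankel_doubly_pos (J \<circ> V) P"
  using P_psd P_inj P_bop hankW PW_psd
  by (simp add: strictly_pos_def hankel_doubly_pos_def hankel_def)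

end

lemma logconvex_bound:
  fixes c :: "nat \<Rightarrow> real"
  assumes nn: "\<And>n. 0 \<le> c n" and lc: "\<And>n. (c (Suc n))^2 \<le> c n * c (Suc (Suc n))"
    and bd: "\<And>n. c n \<le> M"
  shows "c 1 \<le> c 0"
proof (rule ccontr)
  assume "\<not> c 1 \<le> c 0"
  then have gt: "c 0 < c 1" by simp
  have c0: "c 0 > 0"
  proof (rule ccontr)
    assume "\<not> c 0 > 0" then have "c 0 = 0" using nn[of 0] by simp
    then have "(c 1)^2 \<le> 0" using lc[of 0] by simp
    moreover have "0 < (c 1)^2" using gt \<open>c 0 = 0\<close> by simp
    ultimately show False by linarith
  qed
  define r where "r = c 1 / c 0"
  have r1: "r > 1" using gt c0 by (simp add: r_def)
  have step: "r * c n \<le> c (Suc n) \<and> 0 < c n" for n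
  proof (induction n)
    case 0 then show ?case using c0 by (simp add: r_def)
  next
    case (Suc n)
    then have cn: "0 < c n" and h: "r * c n \<le> c (Suc n)" by auto
    have cs: "0 < c (Suc n)" using h cn r1 by (smt (verit) mult_pos_pos)
    have "c (Suc n) * (r * c n) \<le> c (Suc n) * c (Suc n)" using h cs by (simp add: mult_left_mono)
    also have "\<dots> \<le> c n * c (Suc (Suc n))" using lc[of n] by (simp add: power2_eq_square)
    finally have "c n * (r * c (Suc n)) \<le> c n * c (Suc (Suc n))" by (simp add: algebra_simps)
    then have "r * c (Suc n) \<le> c (Suc (Suc n))" using cn by simp
    then show ?case using cs by simp
  qed
  have pw: "r ^ n * c 0 \<le> c n" for n
  proof (induction n)
    case 0 then show ?case by simp
  next
    case (Suc n)
    have "r ^ Suc n * c 0 = r * (r ^ n * c 0)" by simp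
    also have "\<dots> \<le> r * c n" using Suc r1 by (simp add: mult_left_mono)
    also have "\<dots> \<le> c (Suc n)" using step[of n] by simp
    finally show ?case .
  qed
  obtain n where "M / c 0 < r ^ n" using real_arch_pow[OF r1] by blast
  then have "M < r ^ n * c 0" using c0 by (simp add: field_simps)
  then show False using pw[of n] bd[of n] by simp
qed

context thmC begin

definition W where "W = J \<circ> V"
lemma W_bop': "bop W" using W_bop by (simp add: W_def)
lemma W_iso': "isometry W" using W_iso by (simp add: W_def)
lemma PW_psd': "psd (P \<circ> W)" using PW_psd by (simp add: W_def)

definition B where "B x y = cinner (P x) y"

lemma B_add: "B x (y + z) = B x y + B x z" by (simp add: B_def cinner_add_right)
lemma B_sc: "B x (scaleC c y) = c * B x y" by (simp add: B_def cinner_scaleC_right)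
lemma B_herm: "B y x = cnj (B x y)"
  by (simp add: B_def P_herm[of y x]) (metis cinner_commute)
lemma B_pos: "Im (B x x) = 0 \<and> 0 \<le> Re (B x x)"
  using P_psd by (simp add: psd_def B_def P_herm)
lemma B_CS: "(cmod (B x y))^2 \<le> Re (B x x) * Re (B y y)"
  by (rule sesq_CS[OF B_add B_sc B_herm B_pos])
lemma B_W: "B (W x) y = B x (W y)" using PW_herm[of x y] by (simp add: B_def W_def)
lemma B_real: "B x x = complex_of_real (Re (B x x))"
  using B_pos by (simp add: complex_eq_iff)
lemma B_addl: "B (x + y) z = B x z + B y z" by (simp add: B_def bop_add[OF P_bop] cinner_add_left)
lemma B_diffl: "B (x - y) z = B x z - B y z" by (simp add: B_def bop_diff[OF P_bop] cinner_diff_left)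
lemma B_diffr: "B x (y - z) = B x y - B x z" by (simp add: B_def cinner_diff_right)
lemma B_minusl: "B (- x) z = - B x z" by (simp add: B_def bop_minus[OF P_bop] cinner_minus_left)

lemma B_zero: assumes "Re (B x x) = 0" shows "x = 0"
proof -
  have "B x y = 0" for y using B_CS[of x y] assms by simp
  then have "cinner (P x) y = cinner 0 y" for y by (simp add: B_def)
  then have "P x = 0" by (rule cinner_ext)
  then have "P x = P 0" by (simp add: bop_zero[OF P_bop])
  then show ?thesis using P_inj by (simp add: inj_eq)
qed

lemma B_bound: "\<exists>K. \<forall>x. Re (B x x) \<le> K * (norm x)^2"
proof -
  obtain K where K: "\<And>x. norm (P x) \<le> K * norm x" using bop_bound[OF P_bop] by blast
  have "Re (B x x) \<le> K * (norm x)^2" for x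
  proof -
    have "Re (B x x) \<le> cmod (B x x)" by (rule complex_Re_le_cmod)
    also have "\<dots> \<le> norm (P x) * norm x" unfolding B_def by (rule cinner_CS)
    also have "\<dots> \<le> K * norm x * norm x" using K[of x] by (simp add: mult_right_mono)
    finally show ?thesis by (simp add: power2_eq_square mult.assoc)
  qed
  then show ?thesis by blast
qed

lemma seq_lemma:
  assumes sh: "\<And>n. B (u (Suc n)) (u (Suc n)) = B (u n) (u (Suc (Suc n)))"
    and nb: "\<And>n. norm (u n) = R"
  shows "Re (B (u 1) (u 1)) \<le> Re (B (u 0) (u 0))"
proof -
  obtain K where K: "\<And>x. Re (B x x) \<le> K * (norm x)^2" using B_bound by blast
  define c where "c n = Re (B (u n) (u n))" for n
  have "c 1 \<le> c 0"
  proof (rule logconvex_bound)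
    show "0 \<le> c n" for n using B_pos by (simp add: c_def)
    show "c n \<le> K * R^2" for n using K[of "u n"] nb[of n] by (simp add: c_def)
    show "(c (Suc n))^2 \<le> c n * c (Suc (Suc n))" for n
    proof -
      have "(c (Suc n))^2 = (cmod (B (u (Suc n)) (u (Suc n))))^2"
        by (subst B_real) (simp add: c_def)
      also have "\<dots> = (cmod (B (u n) (u (Suc (Suc n)))))^2" by (simp add: sh)
      also have "\<dots> \<le> c n * c (Suc (Suc n))" unfolding c_def by (rule B_CS)
      finally show ?thesis .
    qed
  qed
  then show ?thesis by (simp add: c_def)
qed

lemma W_norm: "norm (W x) = norm x" using W_iso' by (simp add: isometry_def)

lemma B_forward: "Re (B (W x) (W x)) \<le> Re (B x x)"
proof -
  have "Re (B ((W ^^ 1) x) ((W ^^ 1) x)) \<le> Re (B ((W ^^ 0) x) ((W ^^ 0) x))"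
  proof (rule seq_lemma)
    show "B ((W ^^ Suc n) x) ((W ^^ Suc n) x) = B ((W ^^ n) x) ((W ^^ Suc (Suc n)) x)" for n
      using B_W[of "(W ^^ n) x" "(W ^^ Suc n) x"] by simp
    show "norm ((W ^^ n) x) = norm x" for n
      by (induction n) (simp_all add: W_norm)
  qed
  then show ?thesis by simp
qed

context
  fixes H0 H1 assumes wd: "wold_decomp W H0 H1"
begin

lemma H1_inv: "x \<in> H1 \<Longrightarrow> W x \<in> H1" using wd by (simp add: wold_decomp_def)
lemma H1_onto: "W ` H1 = H1" using wd by (simp add: wold_decomp_def)
lemma H_orth: "x \<in> H0 \<Longrightarrow> y \<in> H1 \<Longrightarrow> cinner x y = 0" using wd by (simp add: wold_decomp_def)
lemma H_orth': "x \<in> H0 \<Longrightarrow> y \<in> H1 \<Longrightarrow> cinner y x = 0" using H_orth by (metis cinner_commute complex_cnj_zero)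
lemma H_dec: "\<exists>x\<in>H0. \<exists>y\<in>H1. z = x + y" using wd by (simp add: wold_decomp_def)
lemma H0_sub: "closed_csubspace H0" using wd by (simp add: wold_decomp_def)
lemma H1_sub: "closed_csubspace H1" using wd by (simp add: wold_decomp_def)
lemma H0_pure: "\<exists>m. pure_on H0 W m" using wd by (simp add: wold_decomp_def)
lemma H0_inv: "x \<in> H0 \<Longrightarrow> W x \<in> H0" using H0_pure by (auto simp: pure_on_def)

lemma B_backward: assumes y: "y \<in> H1" shows "Re (B y y) \<le> Re (B (W y) (W y))"
proof -
  define g where "g = inv_into H1 W"
  have injW: "inj_on W H1"
  proof (rule inj_onI)
    fix a b assume "a \<in> H1" "b \<in> H1" "W a = W b"
    then have "norm (W (a - b)) = 0" by (simp add: bop_diff[OF W_bop'])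
    then show "a = b" by (simp add: W_norm)
  qed
  have gH: "z \<in> H1 \<Longrightarrow> g z \<in> H1" for z using H1_onto by (metis g_def inv_into_into)
  have Wg: "z \<in> H1 \<Longrightarrow> W (g z) = z" for z using H1_onto by (metis g_def f_inv_into_f)
  have gW: "z \<in> H1 \<Longrightarrow> g (W z) = z" for z using injW by (simp add: g_def)
  define x where "x = W y"
  have xH: "x \<in> H1" using y H1_inv by (simp add: x_def)
  have gnH: "(g ^^ n) x \<in> H1" for n by (induction n) (simp_all add: xH gH)
  have "Re (B ((g ^^ 1) x) ((g ^^ 1) x)) \<le> Re (B ((g ^^ 0) x) ((g ^^ 0) x))"
  proof (rule seq_lemma)
    show "B ((g ^^ Suc n) x) ((g ^^ Suc n) x) = B ((g ^^ n) x) ((g ^^ Suc (Suc n)) x)" for n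
    proof -
      have "B ((g ^^ Suc n) x) ((g ^^ Suc n) x) = B ((g ^^ Suc n) x) (W ((g ^^ Suc (Suc n)) x))"
        using Wg[OF gnH[of "Suc n"]] by simp
      also have "\<dots> = B (W ((g ^^ Suc n) x)) ((g ^^ Suc (Suc n)) x)" by (simp add: B_W)
      also have "\<dots> = B ((g ^^ n) x) ((g ^^ Suc (Suc n)) x)"
        using Wg[OF gnH[of n]] by (simp)
      finally show ?thesis .
    qed
    show "norm ((g ^^ n) x) = norm x" for n
    proof (induction n)
      case (Suc n)
      have "norm ((g ^^ Suc n) x) = norm (W ((g ^^ Suc n) x))" by (simp add: W_norm)
      also have "\<dots> = norm ((g ^^ n) x)" using Wg[OF gnH[of n]] by (simp)
      finally show ?case using Suc by simp
    qed simp
  qed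
  then show ?thesis using gW[OF y] by (simp add: x_def)
qed

lemma W_id_H1: assumes x: "x \<in> H1" shows "W x = x"
proof -
  have x1: "W x \<in> H1" using H1_inv x .
  define b0 where "b0 = B x x"
  define b1 where "b1 = B (W x) (W x)"
  define b2 where "b2 = B (W (W x)) (W (W x))"
  have e01: "Re b0 = Re b1" using B_forward[of x] B_backward[OF x] by (simp add: b0_def b1_def)
  have e12: "Re b1 = Re b2" using B_forward[of "W x"] B_backward[OF x1] by (simp add: b2_def b1_def)
  have r: "b0 = complex_of_real (Re b0)" "b1 = complex_of_real (Re b1)" "b2 = complex_of_real (Re b2)"
    using B_real by (simp_all add: b0_def b1_def b2_def)
  define z where "z = W (W x) - x"
  have c1: "B x (W (W x)) = b1" by (simp add: b1_def B_W)
  have c2: "B (W (W x)) x = b1" using c1 B_herm[of "W (W x)" x] r(2) by (metis complex_cnj_complex_of_real)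
  have "B z z = b2 - b1 - b1 + b0"
    by (simp add: z_def B_diffl B_diffr c1 c2 b0_def b2_def)
  then have "Re (B z z) = 0" using e01 e12 by simp
  then have "z = 0" by (rule B_zero)
  then have WW: "W (W x) = x" by (simp add: z_def)
  define u where "u = x - W x"
  have Wu: "W u = - u" by (simp add: u_def bop_diff[OF W_bop'] WW)
  have "0 \<le> Re (cinner u (P (W u)))" using PW_psd' by (simp add: psd_def)
  moreover have "cinner (P (W u)) u = cnj (cinner u (P (W u)))" by (rule cinner_commute)
  ultimately have "0 \<le> Re (B (W u) u)" by (simp add: B_def)
  then have "Re (B u u) \<le> 0" by (simp add: Wu B_minusl)
  then have "Re (B u u) = 0" using B_pos[of u] by simp
  then have "u = 0" by (rule B_zero)
  then show ?thesis by (simp add: u_def)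
qed

lemma pure_fix_zero:
  assumes pu: "pure_on S T m" and z: "z \<in> S" and Tz: "T z = z" and S0: "0 \<in> S"
  shows "z = 0"
proof -
  obtain U where bij: "bij_betw U S (ell2n m)"
    and add: "\<forall>x\<in>S. \<forall>y\<in>S. U (x + y) = (\<lambda>k j. U x k j + U y k j)"
    and sh: "\<forall>x\<in>S. U (T x) = shift_Mz (U x)"
    using pu unfolding pure_on_def by blast
  have "U z = shift_Mz (U z)" using sh z Tz by metis
  then have "U z k j = 0" for k j
  proof (induction k)
    case 0 then show ?case by (metis shift_Mz_def)
  next
    case (Suc k) then show ?case by (metis shift_Mz_def diff_Suc_1 nat.distinct(1))
  qed
  moreover have "U 0 k j = 0" for k j using add S0 by (metis add_0 add_cancel_right_right)
  ultimately have "U z = U 0" by (intro ext) simp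
  then show ?thesis using bij z S0 by (metis bij_betw_imp_inj_on inj_on_contraD)
qed

lemma P_H1: assumes y: "y \<in> H1" shows "P y \<in> H1"
proof -
  obtain z0 z1 where z0: "z0 \<in> H0" and z1: "z1 \<in> H1" and dec: "P y = z0 + z1" using H_dec by blast
  have eq: "cinner z0 x = cinner z0 (W x)" if x: "x \<in> H0" for x
  proof -
    have "cinner (P y) x = B y x" by (simp add: B_def)
    also have "\<dots> = B (W y) x" using W_id_H1[OF y] by simp
    also have "\<dots> = cinner (P y) (W x)" using B_W[of y x] by (simp add: B_def)
    finally have "cinner (z0 + z1) x = cinner (z0 + z1) (W x)" by (simp add: dec)
    moreover have "cinner z1 x = 0" using H_orth'[OF x z1] .
    moreover have "cinner z1 (W x) = 0" using H_orth'[OF H0_inv[OF x] z1] .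
    ultimately show ?thesis by (simp add: cinner_add_left)
  qed
  have "cinner z0 (W z0) = complex_of_real ((norm z0)^2)" using eq[OF z0] by (simp add: cinner_self)
  then have "cinner (W z0) z0 = complex_of_real ((norm z0)^2)" by (metis cinner_commute complex_cnj_complex_of_real)
  then have "(norm (W z0 - z0))^2 = 0" using norm_diff_sq[of "W z0" z0] by (simp add: W_norm)
  then have "W z0 = z0" by simp
  moreover obtain m where "pure_on H0 W m" using H0_pure by blast
  ultimately have "z0 = 0" using pure_fix_zero z0 H0_sub by (auto simp: closed_csubspace_def)
  then show ?thesis using dec z1 by simp
qed

lemma P_H0: assumes x: "x \<in> H0" shows "P x \<in> H0"
proof -
  obtain z0 z1 where z0: "z0 \<in> H0" and z1: "z1 \<in> H1" and dec: "P x = z0 + z1" using H_dec by blast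
  have "cinner z1 z1 = cinner (P x - z0) z1" by (simp add: dec)
  also have "\<dots> = cinner x (P z1) - cinner z0 z1" by (simp add: cinner_diff_left P_herm)
  also have "\<dots> = 0" using H_orth[OF x P_H1[OF z1]] H_orth[OF z0 z1] by simp
  finally have "z1 = 0" by (simp add: cinner_self_eq_0)
  then show ?thesis using dec z0 by simp
qed

lemma W_H1: "(\<forall>x\<in>H1. W x = x) \<or> H1 = {0}" using W_id_H1 by blast

end
end

definition nsq :: "(nat \<Rightarrow> nat \<Rightarrow> complex) \<Rightarrow> nat \<times> nat \<Rightarrow> real" where
  "nsq f = (\<lambda>(k, j). (cmod (f k j))^2)"
definition N2 where "N2 f = infsum (nsq f) UNIV"

lemma ell2n_summable: "f \<in> ell2n n \<Longrightarrow> nsq f summable_on UNIV"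
  by (simp add: ell2n_def nsq_def)

lemma single_sum:
  fixes d :: "nat \<times> nat \<Rightarrow> real"
  assumes "\<And>p. p \<noteq> p0 \<Longrightarrow> d p = 0"
  shows "d summable_on UNIV" "infsum d UNIV = d p0"
proof -
  have "d summable_on UNIV \<longleftrightarrow> d summable_on {p0}"
    by (rule summable_on_cong_neutral) (use assms in auto)
  then show "d summable_on UNIV" by simp
  have "infsum d UNIV = infsum d {p0}"
    by (rule infsum_cong_neutral) (use assms in auto)
  then show "infsum d UNIV = d p0" by simp
qed

lemma shift_nsq_o: "nsq (shift_Mz g) \<circ> (\<lambda>(k, j). (Suc k, j)) = nsq g"
  by (rule ext) (auto simp: nsq_def shift_Mz_def)

lemma shift_summable:
  assumes "nsq g summable_on UNIV"
  shows "nsq (shift_Mz g) summable_on UNIV" "N2 (shift_Mz g) = N2 g"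
proof -
  define h where "h = (\<lambda>(k::nat, j::nat). (Suc k, j))"
  have inj: "inj_on h UNIV" by (auto simp: h_def inj_on_def)
  have out: "p \<notin> range h \<Longrightarrow> nsq (shift_Mz g) p = 0" for p
  proof -
    assume "p \<notin> range h"
    then have "fst p = 0" unfolding h_def by (cases p) (metis (no_types, lifting) case_prod_conv not0_implies_Suc rangeI fst_conv)
    then show ?thesis by (cases p) (simp add: nsq_def shift_Mz_def)
  qed
  have s1: "nsq (shift_Mz g) summable_on range h"
    using summable_on_reindex[OF inj, of "nsq (shift_Mz g)"] shift_nsq_o[of g] assms by (simp add: h_def)
  have "nsq (shift_Mz g) summable_on UNIV \<longleftrightarrow> nsq (shift_Mz g) summable_on range h"
    by (rule summable_on_cong_neutral) (use out in auto)
  then show "nsq (shift_Mz g) summable_on UNIV" using s1 by simp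
  have "infsum (nsq (shift_Mz g)) UNIV = infsum (nsq (shift_Mz g)) (range h)"
    by (rule infsum_cong_neutral) (use out in auto)
  also have "\<dots> = infsum (nsq g) UNIV"
    using infsum_reindex[OF inj, of "nsq (shift_Mz g)"] shift_nsq_o[of g] by (simp add: h_def)
  finally show "N2 (shift_Mz g) = N2 g" by (simp add: N2_def)
qed

definition Emod where "Emod n = {f \<in> ell2n n. \<forall>k j. k \<noteq> 0 \<longrightarrow> f k j = 0}"

lemma model_orth:
  assumes f: "f \<in> ell2n n"
  shows "(\<forall>g\<in>ell2n n. \<forall>c. N2 (\<lambda>k j. f k j + c * shift_Mz g k j) = N2 f + (cmod c)^2 * N2 (shift_Mz g))
     \<longleftrightarrow> f \<in> Emod n"
proof
  assume H: "\<forall>g\<in>ell2n n. \<forall>c. N2 (\<lambda>k j. f k j + c * shift_Mz g k j) = N2 f + (cmod c)^2 * N2 (shift_Mz g)"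
  have "f k j = 0" if k: "k \<noteq> 0" for k j
  proof (cases "n \<le> enat j")
    case True then show ?thesis using f by (simp add: ell2n_def)
  next
    case False
    define g where "g = (\<lambda>a b. if a = k - 1 \<and> b = j then (1::complex) else 0)"
    have gs: "nsq g summable_on UNIV" by (rule single_sum(1)[of "(k-1, j)"]) (auto simp: nsq_def g_def split: if_splits)
    have g: "g \<in> ell2n n" using False gs by (auto simp: ell2n_def g_def nsq_def)
    have sg: "shift_Mz g = (\<lambda>a b. if a = k \<and> b = j then 1 else 0)"
      using k by (auto simp: shift_Mz_def g_def fun_eq_iff)
    have n1: "N2 (shift_Mz g) = 1"
      unfolding N2_def sg by (subst single_sum(2)[of "(k, j)"]) (auto simp: nsq_def split: if_splits)
    have "(cmod (f k j + c))^2 - (cmod (f k j))^2 = (cmod c)^2" for c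
    proof -
      define d where "d = (\<lambda>p. if p = (k, j) then (cmod (f k j + c))^2 - (cmod (f k j))^2 else (0::real))"
      have ds: "d summable_on UNIV" "infsum d UNIV = (cmod (f k j + c))^2 - (cmod (f k j))^2"
        using single_sum[of "(k, j)" d] by (auto simp: d_def)
      have "nsq (\<lambda>a b. f a b + c * shift_Mz g a b) = (\<lambda>p. nsq f p + d p)"
        by (auto simp: nsq_def d_def sg fun_eq_iff)
      then have "N2 (\<lambda>a b. f a b + c * shift_Mz g a b) = N2 f + ((cmod (f k j + c))^2 - (cmod (f k j))^2)"
        unfolding N2_def using infsum_add[OF ell2n_summable[OF f] ds(1)] ds(2) by simp
      then show ?thesis using H g n1 by auto
    qed
    from this[of "f k j"] have h3: "(cmod (f k j + f k j))^2 - (cmod (f k j))^2 = (cmod (f k j))^2" .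
    have "f k j + f k j = 2 * f k j" by simp
    then have "(cmod (f k j + f k j))^2 = 4 * (cmod (f k j))^2" by (simp add: norm_mult power_mult_distrib)
    then have "(cmod (f k j))^2 = 0" using h3 by linarith
    then show ?thesis by simp
  qed
  then show "f \<in> Emod n" using f by (simp add: Emod_def)
next
  assume fE: "f \<in> Emod n"
  show "\<forall>g\<in>ell2n n. \<forall>c. N2 (\<lambda>k j. f k j + c * shift_Mz g k j) = N2 f + (cmod c)^2 * N2 (shift_Mz g)"
  proof (intro ballI allI)
    fix g c assume g: "g \<in> ell2n n"
    have ss: "nsq (shift_Mz g) summable_on UNIV" using shift_summable(1)[OF ell2n_summable[OF g]] .
    have "nsq (\<lambda>k j. f k j + c * shift_Mz g k j) = (\<lambda>p. nsq f p + (cmod c)^2 * nsq (shift_Mz g) p)"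
      using fE by (auto simp: nsq_def shift_Mz_def Emod_def fun_eq_iff norm_mult power_mult_distrib)
    then show "N2 (\<lambda>k j. f k j + c * shift_Mz g k j) = N2 f + (cmod c)^2 * N2 (shift_Mz g)"
      unfolding N2_def
      by (simp add: infsum_add[OF ell2n_summable[OF f] summable_on_cmult_right[OF ss]] infsum_cmult_right[OF ss])
  qed
qed

definition Dsp :: "('a::chilbert \<Rightarrow> 'a) \<Rightarrow> 'a set \<Rightarrow> 'a set" where
  "Dsp T S = {x\<in>S. \<forall>y\<in>S. cinner x (T y) = 0}"
definition lin_indep :: "nat \<Rightarrow> (nat \<Rightarrow> 'a::chilbert) \<Rightarrow> bool" where
  "lin_indep k x \<longleftrightarrow> (\<forall>c. (\<Sum>i<k. scaleC (c i) (x i)) = 0 \<longrightarrow> (\<forall>i<k. c i = 0))"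
definition mlin_indep :: "nat \<Rightarrow> (nat \<Rightarrow> nat \<Rightarrow> nat \<Rightarrow> complex) \<Rightarrow> bool" where
  "mlin_indep k f \<longleftrightarrow> (\<forall>c. (\<forall>a b. (\<Sum>i<k. c i * f i a b) = 0) \<longrightarrow> (\<forall>i<k. c i = 0))"
definition has_indep :: "'a::chilbert set \<Rightarrow> ('a \<Rightarrow> 'a) \<Rightarrow> nat \<Rightarrow> bool" where
  "has_indep S T k \<longleftrightarrow> (\<exists>x. (\<forall>i<k. x i \<in> Dsp T S) \<and> lin_indep k x)"
definition subsp :: "'a::chilbert set \<Rightarrow> bool" where
  "subsp S \<longleftrightarrow> 0 \<in> S \<and> (\<forall>x\<in>S. \<forall>y\<in>S. x + y \<in> S) \<and> (\<forall>c. \<forall>x\<in>S. scaleC c x \<in> S)"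

lemma orth_norm: "cinner x z = 0 \<longleftrightarrow> (\<forall>c. (norm (x + scaleC c z))^2 = (norm x)^2 + (cmod c)^2 * (norm (z::'a::chilbert))^2)"
proof -
  have e: "(norm (x + scaleC c z))^2 = (norm x)^2 + (cmod c)^2 * (norm z)^2 + 2 * Re (c * cinner x z)" for c
    by (simp add: norm_add_sq norm_scaleC cinner_scaleC_right power_mult_distrib)
  show ?thesis
  proof
    assume "cinner x z = 0" then show "\<forall>c. (norm (x + scaleC c z))^2 = (norm x)^2 + (cmod c)^2 * (norm z)^2"
      using e by simp
  next
    assume "\<forall>c. (norm (x + scaleC c z))^2 = (norm x)^2 + (cmod c)^2 * (norm z)^2"
    then have "(norm (x + scaleC (cnj (cinner x z)) z))^2 = (norm x)^2 + (cmod (cnj (cinner x z)))^2 * (norm z)^2" by blast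
    then have h: "Re (cnj (cinner x z) * cinner x z) = 0" using e[of "cnj (cinner x z)"] by linarith
    have "cnj (cinner x z) * cinner x z = complex_of_real ((cmod (cinner x z))^2)"
      by (simp only: complex_norm_square mult.commute)
    then have "(cmod (cinner x z))^2 = 0" using h by (metis Re_complex_of_real)
    then show "cinner x z = 0" by simp
  qed
qed

lemma dep_lemma:
  "\<And>I v. finite I \<Longrightarrow> m < card I \<Longrightarrow>
     \<exists>c. (\<exists>i\<in>I. c i \<noteq> (0::complex)) \<and> (\<forall>j<m. (\<Sum>i\<in>I. c i * v i j) = 0)"
proof (induction m)
  case 0
  then obtain i where "i \<in> I" by (metis card.empty ex_in_conv less_irrefl)
  then show ?case by (intro exI[of _ "\<lambda>i. 1"]) auto
next
  case (Suc m)
  show ?case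
  proof (cases "\<forall>i\<in>I. v i m = 0")
    case True
    obtain c where c: "\<exists>i\<in>I. c i \<noteq> 0" "\<forall>j<m. (\<Sum>i\<in>I. c i * v i j) = 0"
      using Suc.IH[of I v] Suc.prems by auto
    have "(\<Sum>i\<in>I. c i * v i j) = 0" if "j < Suc m" for j
    proof (cases "j = m")
      case True then show ?thesis using \<open>\<forall>i\<in>I. v i m = 0\<close> by simp
    next
      case False then show ?thesis using c(2) that by simp
    qed
    then show ?thesis using c(1) by blast
  next
    case False
    then obtain i0 where i0: "i0 \<in> I" and p: "v i0 m \<noteq> 0" by blast
    define p where "p = v i0 m"
    define I' where "I' = I - {i0}"
    define w where "w i j = p * v i j - v i m * v i0 j" for i j
    have fI': "finite I'" using Suc.prems by (simp add: I'_def)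
    have cI': "m < card I'" using Suc.prems i0 by (simp add: I'_def)
    obtain c' where c': "\<exists>i\<in>I'. c' i \<noteq> 0" "\<forall>j<m. (\<Sum>i\<in>I'. c' i * w i j) = 0"
      using Suc.IH[OF fI' cI', of w] by blast
    define c where "c i = (if i = i0 then - (\<Sum>i\<in>I'. c' i * v i m) else p * c' i)" for i
    have key: "(\<Sum>i\<in>I. c i * v i j) = (\<Sum>i\<in>I'. c' i * w i j)" for j
    proof -
      have "(\<Sum>i\<in>I. c i * v i j) = c i0 * v i0 j + (\<Sum>i\<in>I'. c i * v i j)"
        using Suc.prems(1) i0 by (simp add: I'_def sum.remove)
      also have "(\<Sum>i\<in>I'. c i * v i j) = (\<Sum>i\<in>I'. p * c' i * v i j)"
        by (rule sum.cong) (auto simp: c_def I'_def)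
      also have "c i0 * v i0 j = - (\<Sum>i\<in>I'. c' i * v i m * v i0 j)"
        by (simp add: c_def sum_distrib_right)
      finally have "(\<Sum>i\<in>I. c i * v i j) = (\<Sum>i\<in>I'. p * c' i * v i j - c' i * v i m * v i0 j)"
        by (simp add: sum_subtractf)
      also have "\<dots> = (\<Sum>i\<in>I'. c' i * w i j)"
        by (rule sum.cong) (auto simp: w_def algebra_simps)
      finally show ?thesis .
    qed
    have "(\<Sum>i\<in>I. c i * v i j) = 0" if "j < Suc m" for j
    proof (cases "j = m")
      case True
      have "w i m = 0" for i by (simp add: w_def p_def)
      then show ?thesis using key True by simp
    next
      case False then show ?thesis using key c'(2) that by simp
    qed
    moreover obtain i1 where "i1 \<in> I'" "c' i1 \<noteq> 0" using c'(1) by blast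
    then have "i1 \<in> I" "c i1 \<noteq> 0" using p by (auto simp: I'_def c_def p_def)
    ultimately show ?thesis by blast
  qed
qed

lemma model_count: "(\<exists>f. (\<forall>i<k. f i \<in> Emod n) \<and> mlin_indep k f) \<longleftrightarrow> enat k \<le> n"
proof
  assume "\<exists>f. (\<forall>i<k. f i \<in> Emod n) \<and> mlin_indep k f"
  then obtain f where fE: "\<forall>i<k. f i \<in> Emod n" and li: "mlin_indep k f" by blast
  show "enat k \<le> n"
  proof (rule ccontr)
    assume "\<not> enat k \<le> n"
    then obtain m where n: "n = enat m" and mk: "m < k" by (cases n) auto
    obtain c where c: "\<exists>i\<in>{..<k}. c i \<noteq> 0" "\<forall>j<m. (\<Sum>i<k. c i * f i 0 j) = 0"
      using dep_lemma[of "{..<k}" m "\<lambda>i j. f i 0 j"] mk by auto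
    have "(\<Sum>i<k. c i * f i a b) = 0" for a b
    proof (cases "a = 0 \<and> b < m")
      case True then show ?thesis using c(2) by simp
    next
      case False
      have "f i a b = 0" if "i < k" for i
      proof -
        have fi: "f i \<in> Emod n" using fE that by simp
        show ?thesis
        proof (cases "a = 0")
          case True then have "n \<le> enat b" using False n by simp
          then show ?thesis using fi by (simp add: Emod_def ell2n_def)
        next
          case False then show ?thesis using fi by (simp add: Emod_def)
        qed
      qed
      then show ?thesis by simp
    qed
    then show False using li c(1) by (auto simp: mlin_indep_def)
  qed
next
  assume kn: "enat k \<le> n"
  define f where "f i = (\<lambda>(a::nat) (b::nat). if a = 0 \<and> b = i then (1::complex) else 0)" for i :: nat
  have "f i \<in> Emod n" if "i < k" for i
  proof -
    have "nsq (f i) summable_on UNIV"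
      by (rule single_sum(1)[of "(0, i)"]) (auto simp: nsq_def f_def split: if_splits)
    moreover have "f i a b = 0" if "n \<le> enat b" for a b
    proof -
      have "enat i < n" using \<open>i < k\<close> kn by (meson enat_ord_simps(2) order_less_le_trans)
      then have "b \<noteq> i" using that by auto
      then show ?thesis by (simp add: f_def)
    qed
    ultimately show ?thesis by (auto simp: Emod_def ell2n_def f_def nsq_def)
  qed
  moreover have "mlin_indep k f"
    unfolding mlin_indep_def
  proof (intro allI impI)
    fix c i assume h: "\<forall>a b. (\<Sum>i<k. c i * f i a b) = 0" and i: "i < k"
    have "(\<Sum>l<k. c l * f l 0 i) = c i"
      using i by (simp add: f_def if_distrib cong: if_cong)
    then show "c i = 0" using h by metis
  qed
  ultimately show "\<exists>f. (\<forall>i<k. f i \<in> Emod n) \<and> mlin_indep k f" by blast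
qed

lemma U_sum:
  fixes k :: nat and x :: "nat \<Rightarrow> 'a::chilbert" and c :: "nat \<Rightarrow> complex"
  assumes S: "subsp S"
    and addU: "\<forall>x\<in>S. \<forall>y\<in>S. U (x + y) = (\<lambda>k j. U x k j + U y k j)"
    and scU: "\<forall>c. \<forall>x\<in>S. U (scaleC c x) = (\<lambda>k j. c * U x k j)"
    and xs: "\<forall>i<k. x i \<in> S"
  shows "(\<Sum>i<k. scaleC (c i) (x i)) \<in> S \<and> U (\<Sum>i<k. scaleC (c i) (x i)) = (\<lambda>a b. \<Sum>i<k. c i * U (x i) a b)"
  using xs
proof (induction k)
  case 0
  have "U 0 a b = 0" for a b using addU S unfolding subsp_def by (metis add_0 add_cancel_right_right)
  then show ?case using S by (auto simp: subsp_def)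
next
  case (Suc k)
  then have IH: "(\<Sum>i<k. scaleC (c i) (x i)) \<in> S"
    "U (\<Sum>i<k. scaleC (c i) (x i)) = (\<lambda>a b. \<Sum>i<k. c i * U (x i) a b)" by auto
  have xk: "x k \<in> S" using Suc.prems by simp
  have sk: "scaleC (c k) (x k) \<in> S" using S xk by (simp add: subsp_def)
  have "(\<Sum>i<Suc k. scaleC (c i) (x i)) = (\<Sum>i<k. scaleC (c i) (x i)) + scaleC (c k) (x k)" by simp
  moreover have "(\<Sum>i<k. scaleC (c i) (x i)) + scaleC (c k) (x k) \<in> S" using S IH(1) sk by (simp add: subsp_def)
  moreover have "U ((\<Sum>i<k. scaleC (c i) (x i)) + scaleC (c k) (x k)) = (\<lambda>a b. \<Sum>i<Suc k. c i * U (x i) a b)"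
    using addU IH sk scU xk by auto
  ultimately show ?case by simp
qed

lemma pure_count:
  fixes k :: nat
  assumes pu: "pure_on S T n" and S: "subsp S"
  shows "has_indep S T k \<longleftrightarrow> enat k \<le> n"
proof -
  have TS: "\<forall>x\<in>S. T x \<in> S" using pu by (simp add: pure_on_def)
  obtain U where bij: "bij_betw U S (ell2n n)"
    and addU: "\<forall>x\<in>S. \<forall>y\<in>S. U (x + y) = (\<lambda>k j. U x k j + U y k j)"
    and scU: "\<forall>c. \<forall>x\<in>S. U (scaleC c x) = (\<lambda>k j. c * U x k j)"
    and nrm: "\<forall>x\<in>S. (norm x)^2 = (\<Sum>\<^sub>\<infinity>(k, j)\<in>UNIV. (cmod (U x k j))^2)"
    and shU: "\<forall>x\<in>S. U (T x) = shift_Mz (U x)"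
    using pu unfolding pure_on_def by blast
  have nrm': "x \<in> S \<Longrightarrow> (norm x)^2 = N2 (U x)" for x using nrm by (simp add: N2_def nsq_def)
  have US: "x \<in> S \<Longrightarrow> U x \<in> ell2n n" for x using bij by (meson bij_betwE)
  have Uonto: "g \<in> ell2n n \<Longrightarrow> \<exists>y\<in>S. U y = g" for g using bij by (metis bij_betw_def imageE)
  have imgS: "U ` S = ell2n n" using bij by (simp add: bij_betw_def)
  have injU: "inj_on U S" using bij by (simp add: bij_betw_def)
  have S0: "0 \<in> S" and Sadd: "\<And>x y. x \<in> S \<Longrightarrow> y \<in> S \<Longrightarrow> x + y \<in> S"
    and Ssc: "\<And>c x. x \<in> S \<Longrightarrow> scaleC c x \<in> S" using S by (auto simp: subsp_def)
  have D_iff: "x \<in> Dsp T S \<longleftrightarrow> U x \<in> Emod n" if x: "x \<in> S" for x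
  proof -
    have "x \<in> Dsp T S \<longleftrightarrow> (\<forall>y\<in>S. \<forall>c. (norm (x + scaleC c (T y)))^2 = (norm x)^2 + (cmod c)^2 * (norm (T y))^2)"
      using x by (simp add: Dsp_def orth_norm)
    also have "\<dots> \<longleftrightarrow> (\<forall>y\<in>S. \<forall>c. N2 (\<lambda>k j. U x k j + c * shift_Mz (U y) k j) = N2 (U x) + (cmod c)^2 * N2 (shift_Mz (U y)))"
    proof -
      have "(norm (x + scaleC c (T y)))^2 = (norm x)^2 + (cmod c)^2 * (norm (T y))^2 \<longleftrightarrow>
            N2 (\<lambda>k j. U x k j + c * shift_Mz (U y) k j) = N2 (U x) + (cmod c)^2 * N2 (shift_Mz (U y))"
        if y: "y \<in> S" for y c
      proof -
        have Ty: "T y \<in> S" using TS y by simp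
        have "U (x + scaleC c (T y)) = (\<lambda>k j. U x k j + c * shift_Mz (U y) k j)"
          using addU scU x Ty Ssc shU y by auto
        moreover have "(norm (x + scaleC c (T y)))^2 = N2 (U (x + scaleC c (T y)))"
          by (rule nrm') (intro Sadd x Ssc Ty)
        moreover have "(norm (T y))^2 = N2 (shift_Mz (U y))" using nrm'[OF Ty] shU y by simp
        ultimately show ?thesis using nrm'[OF x] by simp
      qed
      then show ?thesis by blast
    qed
    also have "\<dots> \<longleftrightarrow> (\<forall>g\<in>ell2n n. \<forall>c. N2 (\<lambda>k j. U x k j + c * shift_Mz g k j) = N2 (U x) + (cmod c)^2 * N2 (shift_Mz g))"
      unfolding imgS[symmetric] by simp
    also have "\<dots> \<longleftrightarrow> U x \<in> Emod n" by (rule model_orth[OF US[OF x]])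
    finally show ?thesis .
  qed
  have "has_indep S T k \<longleftrightarrow> (\<exists>f. (\<forall>i<k. f i \<in> Emod n) \<and> mlin_indep k f)"
  proof
    assume "has_indep S T k"
    then obtain x where xD: "\<forall>i<k. x i \<in> Dsp T S" and li: "lin_indep k x" by (auto simp: has_indep_def)
    have xS: "\<forall>i<k. x i \<in> S" using xD by (simp add: Dsp_def)
    have "mlin_indep k (\<lambda>i. U (x i))"
      unfolding mlin_indep_def
    proof (rule allI, rule impI)
      fix c assume h: "\<forall>a b. (\<Sum>i<k. c i * U (x i) a b) = 0"
      have us: "(\<Sum>i<k. scaleC (c i) (x i)) \<in> S" "U (\<Sum>i<k. scaleC (c i) (x i)) = (\<lambda>a b. \<Sum>i<k. c i * U (x i) a b)"
        using U_sum[OF S addU scU xS] by auto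
      have U0: "U 0 a b = 0" for a b using addU S0 by (metis add_0 add_cancel_right_right)
      have "U (\<Sum>i<k. scaleC (c i) (x i)) = U 0" using us(2) U0 h by (simp add: fun_eq_iff)
      then have "(\<Sum>i<k. scaleC (c i) (x i)) = 0" using inj_onD[OF injU _ us(1) S0] by blast
      then show "\<forall>i<k. c i = 0" using li by (simp add: lin_indep_def)
    qed
    moreover have "\<forall>i<k. U (x i) \<in> Emod n"
    proof (intro allI impI)
      fix i assume "i < k" then show "U (x i) \<in> Emod n" using D_iff[of "x i"] xD xS by simp
    qed
    ultimately show "\<exists>f. (\<forall>i<k. f i \<in> Emod n) \<and> mlin_indep k f"
      by (intro exI[of _ "\<lambda>i. U (x i)"] conjI)
  next
    assume "\<exists>f. (\<forall>i<k. f i \<in> Emod n) \<and> mlin_indep k f"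
    then obtain f where fE: "\<forall>i<k. f i \<in> Emod n" and li: "mlin_indep k f" by blast
    define x where "x i = inv_into S U (f i)" for i
    have fl: "f i \<in> ell2n n" if "i < k" for i using fE that by (simp add: Emod_def)
    have xS: "\<forall>i<k. x i \<in> S" using fl bij by (metis x_def bij_betw_def inv_into_into)
    have Ux: "U (x i) = f i" if "i < k" for i using fl[OF that] bij by (metis x_def bij_betw_def f_inv_into_f)
    have "lin_indep k x"
      unfolding lin_indep_def
    proof (rule allI, rule impI)
      fix c assume h: "(\<Sum>i<k. scaleC (c i) (x i)) = 0"
      have "U (\<Sum>i<k. scaleC (c i) (x i)) = (\<lambda>a b. \<Sum>i<k. c i * U (x i) a b)"
        using U_sum[OF S addU scU xS] by auto
      moreover have "U 0 a b = 0" for a b using addU S0 by (metis add_0 add_cancel_right_right)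
      ultimately have "\<forall>a b. (\<Sum>i<k. c i * U (x i) a b) = 0" using h by metis
      then have "\<forall>a b. (\<Sum>i<k. c i * f i a b) = 0" using Ux by simp
      then show "\<forall>i<k. c i = 0" using li by (simp add: mlin_indep_def)
    qed
    moreover have "\<forall>i<k. x i \<in> Dsp T S" using D_iff xS Ux fE by auto
    ultimately show "has_indep S T k" by (auto simp: has_indep_def)
  qed
  then show ?thesis using model_count by simp
qed

lemma enat_eqI: "(\<And>k. enat k \<le> a \<longleftrightarrow> enat k \<le> b) \<Longrightarrow> a = (b::enat)"
proof -
  assume h: "\<And>k. enat k \<le> a \<longleftrightarrow> enat k \<le> b"
  show ?thesis
  proof (cases a)
    case (enat p)
    then have "enat p \<le> b" "\<not> enat (Suc p) \<le> b" using h[of p] h[of "Suc p"] by auto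
    then show ?thesis using enat by (cases b) auto
  next
    case infinity
    then have "enat k \<le> b" for k using h by simp
    then show ?thesis using infinity by (cases b) (auto, metis Suc_n_not_le_n enat_ord_simps(1))
  qed
qed

lemma bop_sum:
  assumes T: "bop T"
  shows "T (\<Sum>i<(k::nat). scaleC (c i) (x i)) = (\<Sum>i<k. scaleC (c i) (T (x i :: 'a::chilbert)))"
  by (induction k) (simp_all add: bop_zero[OF T] bop_add[OF T] bop_scaleC[OF T])

lemma subsp_UNIV: "subsp (UNIV :: 'a::chilbert set)" by (simp add: subsp_def)
lemma subsp_closed: "closed_csubspace S \<Longrightarrow> subsp S" by (simp add: subsp_def closed_csubspace_def)

context thmC begin

lemma J_lin_indep: "lin_indep k x \<Longrightarrow> lin_indep k (\<lambda>i. J (x i))"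
  unfolding lin_indep_def
proof (rule allI, rule impI)
  fix c assume li: "\<forall>c. (\<Sum>i<k. scaleC (c i) (x i)) = 0 \<longrightarrow> (\<forall>i<k. c i = 0)"
    and h: "(\<Sum>i<k. scaleC (c i) (J (x i))) = 0"
  have "J (\<Sum>i<k. scaleC (c i) (x i)) = 0" using h by (simp add: bop_sum[OF J_bop])
  then have "J (J (\<Sum>i<k. scaleC (c i) (x i))) = J 0" by simp
  then have "(\<Sum>i<k. scaleC (c i) (x i)) = 0" by (simp add: JJ bop_zero[OF J_bop])
  then show "\<forall>i<k. c i = 0" using li by blast
qed

lemma JW: "cinner (J x) (W y) = cinner x (V y)"
  by (simp add: W_def J_herm JJ)

context
  fixes H0 H1 assumes wd: "wold_decomp W H0 H1"
begin

lemma V_to_W: assumes x: "x \<in> Dsp V UNIV" shows "J x \<in> Dsp W H0"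
proof -
  have xo: "cinner x (V y) = 0" for y using x by (simp add: Dsp_def)
  obtain a b where a: "a \<in> H0" and b: "b \<in> H1" and dec: "J x = a + b" using H_dec[OF wd] by blast
  obtain y where y: "y \<in> H1" and bW: "b = W y" using H1_onto[OF wd] b by (metis imageE)
  have "cinner (J x) b = 0" using JW xo by (simp add: bW)
  then have "cinner a b + cinner b b = 0" by (simp add: dec cinner_add_left)
  then have "b = 0" using H_orth[OF wd a b] by (simp add: cinner_self_eq_0)
  then have "J x \<in> H0" using dec a by simp
  moreover have "\<forall>y\<in>H0. cinner (J x) (W y) = 0" using JW xo by simp
  ultimately show ?thesis by (simp add: Dsp_def)
qed

lemma W_to_V: assumes yD: "y \<in> Dsp W H0" shows "J y \<in> Dsp V UNIV"
proof -
  have y: "y \<in> H0" and yo: "\<And>z. z \<in> H0 \<Longrightarrow> cinner y (W z) = 0" using yD by (auto simp: Dsp_def)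
  have "cinner (J y) (V z) = 0" for z
  proof -
    obtain z0 z1 where z0: "z0 \<in> H0" and z1: "z1 \<in> H1" and dec: "z = z0 + z1" using H_dec[OF wd] by blast
    have "cinner (J y) (V z) = cinner (J (J y)) (W z)" by (simp add: JW)
    also have "\<dots> = cinner y (W z0) + cinner y (W z1)" by (simp add: JJ dec bop_add[OF W_bop'] cinner_add_right)
    also have "\<dots> = 0" using yo[OF z0] H_orth[OF wd y H1_inv[OF wd z1]] by simp
    finally show ?thesis .
  qed
  then show ?thesis by (simp add: Dsp_def)
qed

lemma indep_eq: "has_indep UNIV V k \<longleftrightarrow> has_indep H0 W k"
proof
  assume "has_indep UNIV V k"
  then obtain x where "\<forall>i<k. x i \<in> Dsp V UNIV" "lin_indep k x" by (auto simp: has_indep_def)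
  then show "has_indep H0 W k" unfolding has_indep_def
    by (intro exI[of _ "\<lambda>i. J (x i)"]) (simp add: V_to_W J_lin_indep)
next
  assume "has_indep H0 W k"
  then obtain x where "\<forall>i<k. x i \<in> Dsp W H0" "lin_indep k x" by (auto simp: has_indep_def)
  then show "has_indep UNIV V k" unfolding has_indep_def
    by (intro exI[of _ "\<lambda>i. J (x i)"]) (simp add: W_to_V J_lin_indep)
qed

lemma mult_N: "pure_on H0 W N"
proof -
  obtain m where pm: "pure_on H0 W m" using H0_pure[OF wd] by blast
  have pV: "pure_on UNIV V N" using V_pure by (simp add: pure_isometry_def)
  have "m = N"
  proof (rule enat_eqI)
    fix k
    have "enat k \<le> m \<longleftrightarrow> has_indep H0 W k" using pure_count[OF pm subsp_closed[OF H0_sub[OF wd]]] by simp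
    also have "\<dots> \<longleftrightarrow> has_indep UNIV V k" using indep_eq by simp
    also have "\<dots> \<longleftrightarrow> enat k \<le> N" using pure_count[OF pV subsp_UNIV] by simp
    finally show "enat k \<le> m \<longleftrightarrow> enat k \<le> N" .
  qed
  then show ?thesis using pm by simp
qed

end

lemma part2: "\<forall>H0 H1. wold_decomp (J \<circ> V) H0 H1 \<longrightarrow>
        pure_on H0 (J \<circ> V) N \<and> P ` H0 \<subseteq> H0 \<and> P ` H1 \<subseteq> H1 \<and>
        ((\<forall>x\<in>H1. (J \<circ> V) x = x) \<or> H1 = {0})"
proof (intro allI impI)
  fix H0 H1 assume "wold_decomp (J \<circ> V) H0 H1"
  then have wd: "wold_decomp W H0 H1" by (simp add: W_def)
  have "pure_on H0 W N" by (rule mult_N[OF wd])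
  moreover have "P ` H0 \<subseteq> H0" using P_H0[OF wd] by blast
  moreover have "P ` H1 \<subseteq> H1" using P_H1[OF wd] by blast
  moreover have "(\<forall>x\<in>H1. W x = x) \<or> H1 = {0}" by (rule W_H1[OF wd])
  ultimately show "pure_on H0 (J \<circ> V) N \<and> P ` H0 \<subseteq> H0 \<and> P ` H1 \<subseteq> H1 \<and>
        ((\<forall>x\<in>H1. (J \<circ> V) x = x) \<or> H1 = {0})" by (simp add: W_def)
qed

end

theorem theoremC:
  fixes A V P J :: "'a::chilbert \<Rightarrow> 'a" and N :: enat
  assumes sep: "separable_space TYPE('a)"
    and A_bop: "bop A" and A_sa: "adj A = A" and A_inj: "inj A"
    and V_pure: "pure_isometry V N"
    and A_hankel: "hankel V A"
    and AV_pos: "strictly_pos (A \<circ> V)"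
    and P_psd: "psd P" and P_sq: "P \<circ> P = adj A \<circ> A"
    and J_bop: "bop J" and J_sa: "adj J = J" and J_unitary: "unitary_op J"
    and polar: "A = J \<circ> P"
  shows "strictly_pos P \<and> hankel_doubly_pos (J \<circ> V) P \<and>
    (\<forall>H0 H1. wold_decomp (J \<circ> V) H0 H1 \<longrightarrow>
        pure_on H0 (J \<circ> V) N \<and> P ` H0 \<subseteq> H0 \<and> P ` H1 \<subseteq> H1 \<and>
        ((\<forall>x\<in>H1. (J \<circ> V) x = x) \<or> H1 = {0}))"
proof -
  interpret thmC A V P J N
    by (unfold_locales) (use A_bop A_sa A_inj V_pure A_hankel AV_pos P_psd P_sq J_bop J_sa J_unitary polar in auto)
  show ?thesis using part1 part2 by blast
qed

end
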